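(* Let $a=a_0+a_1e_1+a_2e_2+a_3e_3$ and $b=b_0+b_1e_1+b_2e_2+b_3e_3$ be nonzero elements of $C\ell_2$, let $U=\mathrm{diag}(1,-1,-1,-1)$ and $W(a,b)=L(a)-R(b)U$. Then the eigenvalues of $W(a,b)$ are $$\lambda_{1,2}=a_0\pm\sqrt{G(a)+H_b},\qquad \lambda_{3,4}=a_0+b_0\pm\sqrt{G(a)+G(b)+2(-a_1b_1-a_2b_2+a_3b_3)},$$ and $$\det(W(a,b))=(H_a-H_b)\big(H_a+H_b+2(a_0b_0+a_1b_1+a_2b_2-a_3b_3)\big)=(H_a-H_b)H_{\bar a+b}.$$
   Context: $C\ell_2$ is the 4-dimensional real associative algebra with basis $1,e_1,e_2,e_3$ and multiplication $e_1^2=e_2^2=1$, $e_3^2=-1$, $e_1e_2=e_3=-e_2e_1$, $e_1e_3=e_2=-e_3e_1$, $e_3e_2=e_1=-e_2e_3$. For $a=a_0+a_1e_1+a_2e_2+a_3e_3$ ($a_i\in\mathbb{R}$): $\bar a=a_0-a_1e_1-a_2e_2-a_3e_3$, $H_a=a_0^2-a_1^2-a_2^2+a_3^2$, $G(a)=a_1^2+a_2^2-a_3^2$, $$L(a)=\begin{pmatrix} a_0&a_1&a_2&-a_3\\ a_1&a_0&a_3&-a_2\\ a_2&-a_3&a_0&a_1\\ a_3&-a_2&a_1&a_0\end{pmatrix},\qquad R(a)=\begin{pmatrix} a_0&a_1&a_2&-a_3\\ a_1&a_0&-a_3&a_2\\ a_2&a_3&a_0&-a_1\\ a_3&a_2&-a_1&a_0\end{pmatrix}.$$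 (Square roots are complex when the radicand is negative.) The equation $ax=\bar x b$ is equivalent to $W(a,b)\overrightarrow{x}=0$, with $\overrightarrow{x}=(x_0,x_1,x_2,x_3)^T$. *)

theory Defs
  imports "Jordan_Normal_Form.Char_Poly"
begin

datatype cl2 = Cl2 (c0: real) (c1: real) (c2: real) (c3: real)

definition cl2_zero :: cl2 where "cl2_zero = Cl2 0 0 0 0"

definition cl2_add :: "cl2 \<Rightarrow> cl2 \<Rightarrow> cl2" where
  "cl2_add a b = Cl2 (c0 a + c0 b) (c1 a + c1 b) (c2 a + c2 b) (c3 a + c3 b)"

definition cl2_conj :: "cl2 \<Rightarrow> cl2" where
  "cl2_conj a = Cl2 (c0 a) (- c1 a) (- c2 a) (- c3 a)"

definition H :: "cl2 \<Rightarrow> real" where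
  "H a = (c0 a)^2 - (c1 a)^2 - (c2 a)^2 + (c3 a)^2"

definition G :: "cl2 \<Rightarrow> real" where
  "G a = (c1 a)^2 + (c2 a)^2 - (c3 a)^2"

definition Lmat :: "cl2 \<Rightarrow> real mat" where
  "Lmat a = mat_of_rows_list 4
     [[c0 a, c1 a, c2 a, - c3 a],
      [c1 a, c0 a, c3 a, - c2 a],
      [c2 a, - c3 a, c0 a, c1 a],
      [c3 a, - c2 a, c1 a, c0 a]]"

definition Rmat :: "cl2 \<Rightarrow> real mat" where
  "Rmat a = mat_of_rows_list 4
     [[c0 a, c1 a, c2 a, - c3 a],
      [c1 a, c0 a, - c3 a, c2 a],
      [c2 a, c3 a, c0 a, - c1 a],
      [c3 a, c2 a, - c1 a, c0 a]]"

definition Umat :: "real mat" where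
  "Umat = mat_of_rows_list 4
     [[1, 0, 0, 0],
      [0, -1, 0, 0],
      [0, 0, -1, 0],
      [0, 0, 0, -1]]"

definition Wmat :: "cl2 \<Rightarrow> cl2 \<Rightarrow> real mat" where
  "Wmat a b = Lmat a - Rmat b * Umat"

end

theory Submission imports Defs begin

lemma det1: assumes "(A :: 'a :: comm_ring_1 mat) \<in> carrier_mat 1 1"
  shows "det A = A$$(0,0)"
proof -
  have c: "mat_delete A 0 0 \<in> carrier_mat 0 0" using mat_delete_carrier[OF assms] by simp
  show ?thesis using laplace_expansion_row[OF assms, of 0] det_dim_zero[OF c] by (simp add: cofactor_def)
qed

lemma det2: assumes "(A :: 'a :: comm_ring_1 mat) \<in> carrier_mat 2 2"
  shows "det A = A$$(0,0) * A$$(1,1) - A$$(0,1) * A$$(1,0)"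
proof -
  have c: "mat_delete A 0 j \<in> carrier_mat 1 1" for j using mat_delete_carrier[OF assms] by simp
  have "det A = (\<Sum>j<2. A $$ (0,j) * cofactor A 0 j)" by (rule laplace_expansion_row[OF assms]) simp
  also have "\<dots> = A $$ (0,0) * det (mat_delete A 0 0) - A $$ (0,1) * det (mat_delete A 0 1)"
    by (simp add: cofactor_def numeral_eq_Suc)
  also have "\<dots> = A$$(0,0) * A$$(1,1) - A$$(0,1) * A$$(1,0)"
    unfolding det1[OF c] using assms by (simp add: mat_delete_def)
  finally show ?thesis .
qed

lemma det3: assumes "(A :: 'a :: comm_ring_1 mat) \<in> carrier_mat 3 3"
  shows "det A = A$$(0,0) * (A$$(1,1) * A$$(2,2) - A$$(1,2) * A$$(2,1))
     - A$$(0,1) * (A$$(1,0) * A$$(2,2) - A$$(1,2) * A$$(2,0))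
     + A$$(0,2) * (A$$(1,0) * A$$(2,1) - A$$(1,1) * A$$(2,0))"
proof -
  have c: "mat_delete A 0 j \<in> carrier_mat 2 2" for j using mat_delete_carrier[OF assms] by simp
  have "det A = (\<Sum>j<3. A $$ (0,j) * cofactor A 0 j)" by (rule laplace_expansion_row[OF assms]) simp
  also have "\<dots> = A $$ (0,0) * det (mat_delete A 0 0) - A $$ (0,1) * det (mat_delete A 0 1)
     + A $$ (0,2) * det (mat_delete A 0 2)"
    by (simp add: cofactor_def numeral_eq_Suc)
  finally show ?thesis
    unfolding det2[OF c] using assms by (simp add: mat_delete_def numeral_eq_Suc)
qed

lemma det4: assumes "(A :: 'a :: comm_ring_1 mat) \<in> carrier_mat 4 4"
  shows "det A = 
       A$$(0,0) * (A$$(1,1) * (A$$(2,2) * A$$(3,3) - A$$(2,3) * A$$(3,2))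
     - A$$(1,2) * (A$$(2,1) * A$$(3,3) - A$$(2,3) * A$$(3,1))
     + A$$(1,3) * (A$$(2,1) * A$$(3,2) - A$$(2,2) * A$$(3,1)))
     - A$$(0,1) * (A$$(1,0) * (A$$(2,2) * A$$(3,3) - A$$(2,3) * A$$(3,2))
     - A$$(1,2) * (A$$(2,0) * A$$(3,3) - A$$(2,3) * A$$(3,0))
     + A$$(1,3) * (A$$(2,0) * A$$(3,2) - A$$(2,2) * A$$(3,0)))
     + A$$(0,2) * (A$$(1,0) * (A$$(2,1) * A$$(3,3) - A$$(2,3) * A$$(3,1))
     - A$$(1,1) * (A$$(2,0) * A$$(3,3) - A$$(2,3) * A$$(3,0))
     + A$$(1,3) * (A$$(2,0) * A$$(3,1) - A$$(2,1) * A$$(3,0)))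
     - A$$(0,3) * (A$$(1,0) * (A$$(2,1) * A$$(3,2) - A$$(2,2) * A$$(3,1))
     - A$$(1,1) * (A$$(2,0) * A$$(3,2) - A$$(2,2) * A$$(3,0))
     + A$$(1,2) * (A$$(2,0) * A$$(3,1) - A$$(2,1) * A$$(3,0)))"
proof -
  have c: "mat_delete A 0 j \<in> carrier_mat 3 3" for j using mat_delete_carrier[OF assms] by simp
  have "det A = (\<Sum>j<4. A $$ (0,j) * cofactor A 0 j)" by (rule laplace_expansion_row[OF assms]) simp
  also have "\<dots> = A $$ (0,0) * det (mat_delete A 0 0) - A $$ (0,1) * det (mat_delete A 0 1)
     + A $$ (0,2) * det (mat_delete A 0 2) - A $$ (0,3) * det (mat_delete A 0 3)"
    by (simp add: cofactor_def numeral_eq_Suc)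
  finally show ?thesis
    unfolding det3[OF c] using assms by (simp add: mat_delete_def numeral_eq_Suc)
qed

lemma W_eq: "Wmat a b = mat_of_rows_list 4
  [[c0 a - c0 b, c1 a + c1 b, c2 a + c2 b, - c3 a - c3 b],
   [c1 a - c1 b, c0 a + c0 b, c3 a - c3 b, - c2 a + c2 b],
   [c2 a - c2 b, - c3 a + c3 b, c0 a + c0 b, c1 a - c1 b],
   [c3 a - c3 b, - c2 a + c2 b, c1 a - c1 b, c0 a + c0 b]]"
  apply (rule eq_matI)
  apply (auto simp: Wmat_def Lmat_def Rmat_def Umat_def mat_of_rows_list_def scalar_prod_def
     numeral_eq_Suc lessThan_Suc atLeast0LessThan less_Suc_eq)
  done


lemma W_idx: "i < 4 \<Longrightarrow> j < 4 \<Longrightarrow> Wmat a b $$ (i,j) =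
  [[c0 a - c0 b, c1 a + c1 b, c2 a + c2 b, - c3 a - c3 b],
   [c1 a - c1 b, c0 a + c0 b, c3 a - c3 b, - c2 a + c2 b],
   [c2 a - c2 b, - c3 a + c3 b, c0 a + c0 b, c1 a - c1 b],
   [c3 a - c3 b, - c2 a + c2 b, c1 a - c1 b, c0 a + c0 b]] ! i ! j"
  unfolding W_eq by (simp add: mat_of_rows_list_def)

lemma W_carrier: "Wmat a b \<in> carrier_mat 4 4"
  unfolding W_eq mat_of_rows_list_def carrier_mat_def by simp

theorem proposition5p7:
  fixes a b :: cl2
  assumes "a \<noteq> cl2_zero" and "b \<noteq> cl2_zero"
  defines "lam1 \<equiv> complex_of_real (c0 a) + csqrt (complex_of_real (G a + H b))"
      and "lam2 \<equiv> complex_of_real (c0 a) - csqrt (complex_of_real (G a + H b))"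
      and "lam3 \<equiv> complex_of_real (c0 a + c0 b) + csqrt (complex_of_real
                 (G a + G b + 2 * (- c1 a * c1 b - c2 a * c2 b + c3 a * c3 b)))"
      and "lam4 \<equiv> complex_of_real (c0 a + c0 b) - csqrt (complex_of_real
                 (G a + G b + 2 * (- c1 a * c1 b - c2 a * c2 b + c3 a * c3 b)))"
  shows "char_poly (map_mat complex_of_real (Wmat a b))
           = [:-lam1, 1:] * [:-lam2, 1:] * [:-lam3, 1:] * [:-lam4, 1:]
         \<and> det (Wmat a b) = (H a - H b) *
           (H a + H b + 2 * (c0 a * c0 b + c1 a * c1 b + c2 a * c2 b - c3 a * c3 b))
         \<and> det (Wmat a b) = (H a - H b) * H (cl2_add (cl2_conj a) b)"
proof (intro conjI)
  define M where "M = char_poly_matrix (map_mat complex_of_real (Wmat a b))"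
  have MC: "M \<in> carrier_mat 4 4" unfolding M_def using W_carrier by simp
  have ent: "M $$ (i,j) = (if i = j then [:0,1:] else 0) + [: - complex_of_real (Wmat a b $$ (i,j)) :]"
    if "i < 4" "j < 4" for i j
    using that carrier_matD[OF W_carrier[of a b]] unfolding M_def char_poly_matrix_def by auto
  define s1 where "s1 = csqrt (complex_of_real (G a + H b))"
  define s2 where "s2 = csqrt (complex_of_real
                 (G a + G b + 2 * (- c1 a * c1 b - c2 a * c2 b + c3 a * c3 b)))"
  have s1sq: "s1 * s1 = complex_of_real (G a + H b)" unfolding s1_def
    by (metis power2_csqrt power2_eq_square)
  have s2sq: "s2 * s2 = complex_of_real
                 (G a + G b + 2 * (- c1 a * c1 b - c2 a * c2 b + c3 a * c3 b))" unfolding s2_def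
    by (metis power2_csqrt power2_eq_square)
  show "char_poly (map_mat complex_of_real (Wmat a b))
           = [:-lam1, 1:] * [:-lam2, 1:] * [:-lam3, 1:] * [:-lam4, 1:]"
  proof -
    have "char_poly (map_mat complex_of_real (Wmat a b)) = det M" unfolding M_def char_poly_def ..
    also have "\<dots> = [:-lam1, 1:] * [:-lam2, 1:] * [:-lam3, 1:] * [:-lam4, 1:]"
    proof (subst poly_eq_poly_eq_iff[symmetric], rule ext)
      fix x :: complex
      have r: "poly ([:-lam1, 1:] * [:-lam2, 1:] * [:-lam3, 1:] * [:-lam4, 1:]) x
        = ((x - complex_of_real (c0 a))^2 - s1 * s1) * ((x - complex_of_real (c0 a + c0 b))^2 - s2 * s2)"
        unfolding lam1_def lam2_def lam3_def lam4_def s1_def[symmetric] s2_def[symmetric]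
        by (simp add: algebra_simps power2_eq_square)
      show "poly (det M) x = poly ([:-lam1, 1:] * [:-lam2, 1:] * [:-lam3, 1:] * [:-lam4, 1:]) x"
        unfolding r s1sq s2sq det4[OF MC]
        by (simp add: ent W_idx G_def H_def algebra_simps power2_eq_square)
    qed
    finally show ?thesis .
  qed
  show d: "det (Wmat a b) = (H a - H b) *
           (H a + H b + 2 * (c0 a * c0 b + c1 a * c1 b + c2 a * c2 b - c3 a * c3 b))"
    unfolding det4[OF W_carrier] by (simp add: W_idx H_def algebra_simps power2_eq_square)
  show "det (Wmat a b) = (H a - H b) * H (cl2_add (cl2_conj a) b)"
    unfolding d by (simp add: H_def cl2_add_def cl2_conj_def algebra_simps power2_eq_square)
qed

end
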